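(* For every $\lambda>\lambda^*$, the function $F_\lambda(e)=F(\lambda,e)$ has exactly two roots in $I_\lambda$, both lying in $I_\lambda\cap(-\infty,0)$, and $e(\lambda)$ is the larger of the two, equivalently the root at which $\partial_eF(\lambda,\cdot)>0$.
   Context: Standing setup. Let $\gamma>0$; let $a_1,\dots,a_p>0$ with weights $\omega_i>0$, $\sum_i\omega_i=1$, and $b_1,\dots,b_n>0$ with weights $\pi_j>0$, $\sum_j\pi_j=1$; put $a^*=\max_i a_i$, $b^*=\max_j b_j$. Let $\mu$ be the limiting spectral distribution of $\mathbf{N}\mathbf{N}^T$ where $\mathbf{N}=\mathbf{A}^{1/2}\mathbf{G}\mathbf{B}^{1/2}$ is $k\times l$, $\mathbf{G}$ has iid mean-zero entries of variance $1/l$, $k/l\to\gamma$, and the spectral distributions of $\mathbf{A},\mathbf{B}$ converge to $\nu=\sum_i\omega_i\delta_{a_i}$ and $\underline{\nu}=\sum_j\pi_j\delta_{b_j}$. $\mu$ is a compactly supported probability measure on $[0,\infty)$; $\lambda^*>0$ is the right endpoint of its support, and $s(\lambda)=\int\frac{d\mu(t)}{t-\lambda}$ for $\lambda>\lambda^*$. Define $G(e)=\sum_{j=1}^n\frac{b_j\pi_j}{1+\gamma b_j e}$, $J=\{e: e>-1/(\gamma b^* )\}$, for $\lambda>0$, $I_\lambda=\{e\in J: G(e)<\lambda/a^*\}$, and $F(\lambda,e)=e-\sum_{i=1}^p\frac{a_i\omega_i}{a_iG(e)-\lambda}$. It is known (master equations) that there is a smooth real function $e(\lambda)$ on $(\lambda^*,\infty)$,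 never equal to a pole $-1/(\gamma b_j)$ of $G$ and with $a_iG(e(\lambda))\ne\lambda$, satisfying $s(\lambda)=\sum_{i=1}^p\frac{\omega_i}{a_iG(e(\lambda))-\lambda}$ and $F(\lambda,e(\lambda))=0$. *)

theory Defs
  imports "HOL-Probability.Probability"
begin

definition msupport :: "real measure \<Rightarrow> real set" where
  "msupport M = {x. \<forall>r>0. emeasure M (ball x r) > 0}"

definition stieltjes :: "real measure \<Rightarrow> real \<Rightarrow> real" where
  "stieltjes M lam = (\<integral>t. 1 / (t - lam) \<partial>M)"

definition Gfun :: "real \<Rightarrow> nat \<Rightarrow> (nat \<Rightarrow> real) \<Rightarrow> (nat \<Rightarrow> real) \<Rightarrow> real \<Rightarrow> real" where
  "Gfun \<gamma> n b \<pi> e = (\<Sum>j\<in>{1..n}. b j * \<pi> j / (1 + \<gamma> * b j * e))"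

definition Ffun :: "real \<Rightarrow> nat \<Rightarrow> (nat \<Rightarrow> real) \<Rightarrow> (nat \<Rightarrow> real) \<Rightarrow> nat \<Rightarrow> (nat \<Rightarrow> real) \<Rightarrow> (nat \<Rightarrow> real)
                     \<Rightarrow> real \<Rightarrow> real \<Rightarrow> real" where
  "Ffun \<gamma> p a \<omega> n b \<pi> lam e =
     e - (\<Sum>i\<in>{1..p}. a i * \<omega> i / (a i * Gfun \<gamma> n b \<pi> e - lam))"

definition Jset :: "real \<Rightarrow> nat \<Rightarrow> (nat \<Rightarrow> real) \<Rightarrow> real set" where
  "Jset \<gamma> n b = {e. e > - 1 / (\<gamma> * Max (b ` {1..n}))}"

definition Iset :: "real \<Rightarrow> nat \<Rightarrow> (nat \<Rightarrow> real) \<Rightarrow> nat \<Rightarrow> (nat \<Rightarrow> real) \<Rightarrow> (nat \<Rightarrow> real) \<Rightarrow> real \<Rightarrow> real set" where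
  "Iset \<gamma> p a n b \<pi> lam =
     {e \<in> Jset \<gamma> n b. Gfun \<gamma> n b \<pi> e < lam / Max (a ` {1..p})}"

end

theory Submission
  imports Defs
begin


locale mtsetup =
  fixes \<gamma> :: real and p n :: nat and a \<omega> b \<pi> :: "nat \<Rightarrow> real"
  assumes gamma_pos: "\<gamma> > 0"
    and a_pos: "\<forall>i\<in>{1..p}. a i > 0" and omega_pos: "\<forall>i\<in>{1..p}. \<omega> i > 0"
    and omega_sum: "(\<Sum>i\<in>{1..p}. \<omega> i) = 1"
    and b_pos: "\<forall>j\<in>{1..n}. b j > 0" and pi_pos: "\<forall>j\<in>{1..n}. \<pi> j > 0"
    and pi_sum: "(\<Sum>j\<in>{1..n}. \<pi> j) = 1"
begin

abbreviation G where "G \<equiv> Gfun \<gamma> n b \<pi>"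

definition K :: "real \<Rightarrow> real" where
  "K e = (\<Sum>j\<in>{1..n}. \<gamma> * b j ^ 2 * \<pi> j / (1 + \<gamma> * b j * e) ^ 2)"

definition D :: "real \<Rightarrow> real \<Rightarrow> real" where
  "D lam e = 1 - (\<Sum>i\<in>{1..p}. a i ^ 2 * \<omega> i * K e / (a i * G e - lam) ^ 2)"

definition A where "A = Max (a ` {1..p})"
definition B where "B = Max (b ` {1..n})"

lemma p_ne: "{1..p} \<noteq> {}"
proof
  assume "{1..p} = {}" then show False using omega_sum by simp
qed
lemma n_ne: "{1..n} \<noteq> {}"
proof
  assume "{1..n} = {}" then show False using pi_sum by simp
qed

lemma A_in: "\<exists>i\<in>{1..p}. a i = A"
proof -
  have "A \<in> a ` {1..p}" unfolding A_def using p_ne by (intro Max_in) auto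
  then show ?thesis by auto
qed
lemma B_in: "\<exists>j\<in>{1..n}. b j = B"
proof -
  have "B \<in> b ` {1..n}" unfolding B_def using n_ne by (intro Max_in) auto
  then show ?thesis by auto
qed
lemma A_ge: "i \<in> {1..p} \<Longrightarrow> a i \<le> A"
  unfolding A_def by simp
lemma B_ge: "j \<in> {1..n} \<Longrightarrow> b j \<le> B"
  unfolding B_def by simp
lemma A_pos: "A > 0" using A_in a_pos by auto
lemma B_pos: "B > 0" using B_in b_pos by auto

lemma J_iff: "e \<in> Jset \<gamma> n b \<longleftrightarrow> 1 + \<gamma> * B * e > 0"
proof -
  have "e \<in> Jset \<gamma> n b \<longleftrightarrow> - 1 / (\<gamma> * B) < e" unfolding Jset_def B_def by simp
  also have "\<dots> \<longleftrightarrow> 1 + \<gamma> * B * e > 0"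
  proof -
    have gB: "\<gamma> * B > 0" using gamma_pos B_pos by simp
    have "- 1 / (\<gamma> * B) < e \<longleftrightarrow> - 1 < e * (\<gamma> * B)"
      using gB by (simp only: divide_less_eq) auto
    also have "\<dots> \<longleftrightarrow> 1 + \<gamma> * B * e > 0"
    proof -
      have eq: "e * (\<gamma> * B) = \<gamma> * B * e" by (simp add: ac_simps)
      show ?thesis unfolding eq by auto
    qed
    finally show ?thesis .
  qed
  finally show ?thesis .
qed

lemma J_pole: assumes "e \<in> Jset \<gamma> n b" "j \<in> {1..n}" shows "1 + \<gamma> * b j * e > 0"
proof (cases "e \<ge> 0")
  case True
  have "b j > 0" using b_pos assms(2) by auto
  then have "0 \<le> \<gamma> * b j * e" using gamma_pos True by simp
  then show ?thesis by linarith
next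
  case False
  have "\<gamma> * B * e \<le> \<gamma> * b j * e"
    using False gamma_pos B_ge[OF assms(2)] by (simp add: mult_le_cancel_right)
  then have "1 + \<gamma> * B * e \<le> 1 + \<gamma> * b j * e" by (rule add_left_mono)
  moreover have "1 + \<gamma> * B * e > 0" using J_iff[THEN iffD1, OF assms(1)] .
  ultimately show ?thesis by (rule less_le_trans[rotated])
qed

lemma G_deriv:
  assumes "\<forall>j\<in>{1..n}. 1 + \<gamma> * b j * e \<noteq> 0"
  shows "(G has_real_derivative - K e) (at e)"
proof -
  have "((\<lambda>e. \<Sum>j\<in>{1..n}. b j * \<pi> j / (1 + \<gamma> * b j * e)) has_real_derivative
        (\<Sum>j\<in>{1..n}. - (\<gamma> * b j ^ 2 * \<pi> j / (1 + \<gamma> * b j * e) ^ 2))) (at e)"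
  proof (rule DERIV_sum)
    fix j assume j: "j \<in> {1..n}"
    then have nz: "1 + \<gamma> * b j * e \<noteq> 0" using assms by auto
    show "((\<lambda>e. b j * \<pi> j / (1 + \<gamma> * b j * e)) has_real_derivative
        - (\<gamma> * b j ^ 2 * \<pi> j / (1 + \<gamma> * b j * e) ^ 2)) (at e)"
      using nz by (auto intro!: derivative_eq_intros simp: power2_eq_square field_simps)
  qed
  moreover have "G = (\<lambda>e. \<Sum>j\<in>{1..n}. b j * \<pi> j / (1 + \<gamma> * b j * e))"
    by (simp add: Gfun_def[abs_def])
  ultimately show ?thesis unfolding K_def by (simp add: sum_negf)
qed

lemma G_isCont:
  assumes "\<forall>j\<in>{1..n}. 1 + \<gamma> * b j * e \<noteq> 0" shows "isCont G e"
  using G_deriv[OF assms] DERIV_isCont by blast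

lemma K_isCont:
  assumes "\<forall>j\<in>{1..n}. 1 + \<gamma> * b j * e \<noteq> 0" shows "isCont K e"
  unfolding K_def[abs_def] using assms by (auto intro!: continuous_intros)

lemma F_deriv:
  assumes "\<forall>j\<in>{1..n}. 1 + \<gamma> * b j * e \<noteq> 0" and "\<forall>i\<in>{1..p}. a i * G e \<noteq> lam"
  shows "(Ffun \<gamma> p a \<omega> n b \<pi> lam has_real_derivative D lam e) (at e)"
proof -
  have GD: "(G has_real_derivative - K e) (at e)" by (rule G_deriv[OF assms(1)])
  have "((\<lambda>e. e - (\<Sum>i\<in>{1..p}. a i * \<omega> i / (a i * G e - lam))) has_real_derivative
        1 - (\<Sum>i\<in>{1..p}. a i ^ 2 * \<omega> i * K e / (a i * G e - lam) ^ 2)) (at e)"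
  proof (intro derivative_intros DERIV_sum)
    fix i assume i: "i \<in> {1..p}"
    then have nz: "a i * G e - lam \<noteq> 0" using assms(2) by auto
    have "((\<lambda>e. a i * \<omega> i / (a i * G e - lam)) has_real_derivative
        - (a i * \<omega> i) * (a i * - K e) / (a i * G e - lam) ^ 2) (at e)"
      using nz by (auto intro!: derivative_eq_intros GD simp: power2_eq_square field_simps)
    then show "((\<lambda>e. a i * \<omega> i / (a i * G e - lam)) has_real_derivative
        a i ^ 2 * \<omega> i * K e / (a i * G e - lam) ^ 2) (at e)"
      by (simp add: power2_eq_square ac_simps)
  qed
  then show ?thesis unfolding D_def by (simp add: Ffun_def[abs_def])
qed

end


context mtsetup begin

lemma G_pos: assumes "e \<in> Jset \<gamma> n b" shows "G e > 0"
  unfolding Gfun_def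
proof (rule sum_pos)
  fix j assume j: "j \<in> {1..n}"
  show "0 < b j * \<pi> j / (1 + \<gamma> * b j * e)"
    using J_pole[OF assms j] b_pos pi_pos j by simp
qed (use n_ne in auto)

lemma G_strict_dec: assumes "x \<in> Jset \<gamma> n b" "x < y" shows "G y < G x"
  unfolding Gfun_def
proof (rule sum_strict_mono)
  fix j assume j: "j \<in> {1..n}"
  have px: "1 + \<gamma> * b j * x > 0" using J_pole[OF assms(1) j] .
  have bj: "b j > 0" "\<pi> j > 0" using b_pos pi_pos j by auto
  have "\<gamma> * b j * x < \<gamma> * b j * y" using assms(2) gamma_pos bj by simp
  then have lt: "1 + \<gamma> * b j * x < 1 + \<gamma> * b j * y" by simp
  show "b j * \<pi> j / (1 + \<gamma> * b j * y) < b j * \<pi> j / (1 + \<gamma> * b j * x)"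
    using lt px bj by (intro divide_strict_left_mono) auto
qed (use n_ne in auto)

lemma K_strict_dec: assumes "x \<in> Jset \<gamma> n b" "x < y" shows "K y < K x"
  unfolding K_def
proof (rule sum_strict_mono)
  fix j assume j: "j \<in> {1..n}"
  have px: "1 + \<gamma> * b j * x > 0" using J_pole[OF assms(1) j] .
  have bj: "b j > 0" "\<pi> j > 0" using b_pos pi_pos j by auto
  have "\<gamma> * b j * x < \<gamma> * b j * y" using assms(2) gamma_pos bj by simp
  then have lt: "1 + \<gamma> * b j * x < 1 + \<gamma> * b j * y" by simp
  have sq: "(1 + \<gamma> * b j * x) ^ 2 < (1 + \<gamma> * b j * y) ^ 2"
    using lt px by (intro power_strict_mono) auto
  have c: "0 < \<gamma> * b j ^ 2 * \<pi> j" using gamma_pos bj by simp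
  show "\<gamma> * b j ^ 2 * \<pi> j / (1 + \<gamma> * b j * y) ^ 2 < \<gamma> * b j ^ 2 * \<pi> j / (1 + \<gamma> * b j * x) ^ 2"
  proof -
    have py: "(1 + \<gamma> * b j * y) ^ 2 > 0" using lt px by simp
    have px2: "(1 + \<gamma> * b j * x) ^ 2 > 0" using px by simp
    show ?thesis using sq c mult_pos_pos[OF py px2] by (intro divide_strict_left_mono) auto
  qed
qed (use n_ne in auto)

lemma K_pos: assumes "e \<in> Jset \<gamma> n b" shows "K e > 0"
  unfolding K_def
proof (rule sum_pos)
  fix j assume j: "j \<in> {1..n}"
  show "0 < \<gamma> * b j ^ 2 * \<pi> j / (1 + \<gamma> * b j * e) ^ 2"
  proof -
    have "0 < (1 + \<gamma> * b j * e) ^ 2" using J_pole[OF assms j] by simp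
    moreover have "0 < \<gamma> * b j ^ 2 * \<pi> j"
    proof -
      have "b j > 0" "\<pi> j > 0" using b_pos pi_pos j by auto
      then show ?thesis using gamma_pos by simp
    qed
    ultimately show ?thesis by (rule divide_pos_pos[rotated])
  qed
qed (use n_ne in auto)

lemma I_iff: "e \<in> Iset \<gamma> p a n b \<pi> lam \<longleftrightarrow> e \<in> Jset \<gamma> n b \<and> G e < lam / A"
  unfolding Iset_def A_def by simp

lemma I_u: assumes "e \<in> Iset \<gamma> p a n b \<pi> lam" "i \<in> {1..p}" shows "a i * G e < lam"
proof -
  have J: "e \<in> Jset \<gamma> n b" and lt: "G e < lam / A" using assms(1) I_iff by auto
  have "A * G e < lam" using lt A_pos by (simp add: pos_less_divide_eq mult.commute)
  moreover have "a i * G e \<le> A * G e" using A_ge[OF assms(2)] G_pos[OF J] by simp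
  ultimately show ?thesis by simp
qed

lemma I_conv: assumes "x \<in> Iset \<gamma> p a n b \<pi> lam" "x \<le> z" shows "z \<in> Iset \<gamma> p a n b \<pi> lam"
proof -
  have J: "x \<in> Jset \<gamma> n b" and lt: "G x < lam / A" using assms(1) I_iff by auto
  have Jz: "z \<in> Jset \<gamma> n b" using J assms(2) unfolding Jset_def by auto
  have "G z \<le> G x"
  proof (cases "x = z")
    case False
    then have "x < z" using assms(2) by simp
    then show ?thesis using G_strict_dec[OF J, of z] by simp
  qed simp
  then show ?thesis using I_iff Jz lt by auto
qed

lemma D_strict_mono:
  assumes x: "x \<in> Iset \<gamma> p a n b \<pi> lam" and xy: "x < y"
  shows "D lam x < D lam y"
proof -
  have y: "y \<in> Iset \<gamma> p a n b \<pi> lam" using I_conv[OF x] xy by simp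
  have Jx: "x \<in> Jset \<gamma> n b" using x I_iff by auto
  have Ky: "0 < K y" using K_pos y I_iff by auto
  have KK: "K y < K x" using K_strict_dec[OF Jx xy] .
  have GG: "G y < G x" using G_strict_dec[OF Jx xy] .
  have "(\<Sum>i\<in>{1..p}. a i ^ 2 * \<omega> i * K y / (a i * G y - lam) ^ 2)
      < (\<Sum>i\<in>{1..p}. a i ^ 2 * \<omega> i * K x / (a i * G x - lam) ^ 2)"
  proof (rule sum_strict_mono)
    fix i assume i: "i \<in> {1..p}"
    have ai: "a i > 0" "\<omega> i > 0" using a_pos omega_pos i by auto
    have ux: "lam - a i * G x > 0" using I_u[OF x i] by simp
    have "a i * G y < a i * G x" using GG ai by simp
    then have uxy: "lam - a i * G x < lam - a i * G y" by simp
    have sq: "(a i * G x - lam) ^ 2 < (a i * G y - lam) ^ 2"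
    proof -
      have "(lam - a i * G x) ^ 2 < (lam - a i * G y) ^ 2"
        using uxy ux by (intro power_strict_mono) auto
      then show ?thesis by (simp add: power2_commute)
    qed
    have sx: "(a i * G x - lam) ^ 2 > 0" using ux by simp
    have "K y / (a i * G y - lam) ^ 2 < K x / (a i * G y - lam) ^ 2"
      using KK sq sx by (intro divide_strict_right_mono) auto
    also have "\<dots> \<le> K x / (a i * G x - lam) ^ 2"
    proof -
      have sy: "(a i * G y - lam) ^ 2 > 0" using sq sx by linarith
      show ?thesis using sq KK Ky mult_pos_pos[OF sy sx] by (intro divide_left_mono) auto
    qed
    finally have "K y / (a i * G y - lam) ^ 2 < K x / (a i * G x - lam) ^ 2" .
    then have "(a i ^ 2 * \<omega> i) * (K y / (a i * G y - lam) ^ 2)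
        < (a i ^ 2 * \<omega> i) * (K x / (a i * G x - lam) ^ 2)"
      using ai by (intro mult_strict_left_mono) auto
    then show "a i ^ 2 * \<omega> i * K y / (a i * G y - lam) ^ 2
        < a i ^ 2 * \<omega> i * K x / (a i * G x - lam) ^ 2" by simp
  qed (use p_ne in auto)
  then show ?thesis unfolding D_def by simp
qed

end


lemma sign_const:
  fixes f :: "real \<Rightarrow> real"
  assumes cont: "\<And>x. x > L \<Longrightarrow> isCont f x" and nz: "\<And>x. x > L \<Longrightarrow> f x \<noteq> 0"
    and x0: "x0 > L" "f x0 > 0" and x: "x > L"
  shows "f x > 0"
proof (rule ccontr)
  assume "\<not> f x > 0"
  then have fx: "f x \<le> 0" by simp
  show False
  proof (cases "x \<le> x0")
    case True
    have "continuous_on {x..x0} f" using cont x by (intro continuous_at_imp_continuous_on) auto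
    then obtain z where "x \<le> z" "z \<le> x0" "f z = 0" using IVT'[of f x 0 x0] fx x0 True by auto
    then show False using nz x by auto
  next
    case False
    have "continuous_on {x0..x} f" using cont x0 by (intro continuous_at_imp_continuous_on) auto
    then obtain z where "x0 \<le> z" "z \<le> x" "f z = 0" using IVT2'[of f x 0 x0] fx x0 False by auto
    then show False using nz x0 by auto
  qed
qed

lemma rolle_mono:
  fixes f f' :: "real \<Rightarrow> real"
  assumes der: "\<And>x. x \<in> S \<Longrightarrow> (f has_real_derivative f' x) (at x)"
    and conv: "\<And>x z. x \<in> S \<Longrightarrow> x \<le> z \<Longrightarrow> z \<in> S"
    and mono: "\<And>x y. x \<in> S \<Longrightarrow> x < y \<Longrightarrow> f' x < f' y"
    and xS: "x \<in> S" and xy: "x < y" and fxy: "f x = f y"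
  shows "f' x < 0 \<and> 0 < f' y"
proof -
  have cont: "continuous_on {x..y} f"
  proof (intro continuous_at_imp_continuous_on ballI)
    fix z assume "z \<in> {x..y}"
    then have "z \<in> S" using conv xS by auto
    then show "isCont f z" using der DERIV_isCont by blast
  qed
  have dif: "\<And>z. x < z \<Longrightarrow> z < y \<Longrightarrow> f differentiable (at z)"
  proof -
    fix z assume "x < z" "z < y"
    then have "z \<in> S" using conv xS by auto
    then show "f differentiable (at z)" using der real_differentiable_def by blast
  qed
  obtain z where z: "x < z" "z < y" "DERIV f z :> 0" using Rolle[OF xy fxy cont dif] by blast
  have zS: "z \<in> S" using conv xS z by auto
  have "f' z = 0" using DERIV_unique[OF der[OF zS] z(3)] .
  moreover have "f' x < f' z" using mono xS z by auto
  moreover have "f' z < f' y" using mono zS z by auto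
  ultimately show ?thesis by simp
qed

lemma three_roots:
  fixes f f' :: "real \<Rightarrow> real"
  assumes der: "\<And>x. x \<in> S \<Longrightarrow> (f has_real_derivative f' x) (at x)"
    and conv: "\<And>x z. x \<in> S \<Longrightarrow> x \<le> z \<Longrightarrow> z \<in> S"
    and mono: "\<And>x y. x \<in> S \<Longrightarrow> x < y \<Longrightarrow> f' x < f' y"
    and xS: "x \<in> S" and xy: "x < y" "y < z" and f: "f x = 0" "f y = 0" "f z = 0"
  shows False
proof -
  have yS: "y \<in> S" using conv xS xy by auto
  have "0 < f' y" using rolle_mono[OF der conv mono xS xy(1)] f by auto
  moreover have "f' y < 0" using rolle_mono[OF der conv mono yS xy(2)] f by auto
  ultimately show False by simp
qed



context mtsetup begin

lemma roots_at_lam: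
  assumes lam: "lam > 0" and e2I: "e2 \<in> Iset \<gamma> p a n b \<pi> lam"
    and Fe2: "Ffun \<gamma> p a \<omega> n b \<pi> lam e2 = 0" and De2: "D lam e2 > 0"
  shows "\<exists>e1. e1 < e2 \<and>
           {e \<in> Iset \<gamma> p a n b \<pi> lam. Ffun \<gamma> p a \<omega> n b \<pi> lam e = 0} = {e1, e2} \<and>
           (\<forall>e\<in>{e1, e2}. deriv (Ffun \<gamma> p a \<omega> n b \<pi> lam) e > 0 \<longleftrightarrow> e = e2)"
proof -
  define F where "F = Ffun \<gamma> p a \<omega> n b \<pi> lam"
  define I where "I = Iset \<gamma> p a n b \<pi> lam"
  have IJ: "\<And>x. x \<in> I \<Longrightarrow> x \<in> Jset \<gamma> n b" unfolding I_def using I_iff by auto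
  have derI: "\<And>x. x \<in> I \<Longrightarrow> (F has_real_derivative D lam x) (at x)"
  proof -
    fix x assume x: "x \<in> I"
    show "(F has_real_derivative D lam x) (at x)" unfolding F_def
    proof (rule F_deriv)
      show "\<forall>j\<in>{1..n}. 1 + \<gamma> * b j * x \<noteq> 0" using J_pole[OF IJ[OF x]] by force
      show "\<forall>i\<in>{1..p}. a i * G x \<noteq> lam" using I_u x unfolding I_def by force
    qed
  qed
  have convI: "\<And>x z. x \<in> I \<Longrightarrow> x \<le> z \<Longrightarrow> z \<in> I" unfolding I_def using I_conv by blast
  have monoI: "\<And>x y. x \<in> I \<Longrightarrow> x < y \<Longrightarrow> D lam x < D lam y"
    unfolding I_def using D_strict_mono by blast
  have e2I': "e2 \<in> I" using e2I unfolding I_def .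
  have e2J: "e2 \<in> Jset \<gamma> n b" using IJ[OF e2I'] .
  have Ge2: "G e2 < lam / A" using e2I I_iff by auto
  obtain jB where jB: "jB \<in> {1..n}" "b jB = B" using B_in by blast
  obtain iA where iA: "iA \<in> {1..p}" "a iA = A" using A_in by blast
  have piB: "\<pi> jB > 0" using pi_pos jB by auto
  have omA: "\<omega> iA > 0" using omega_pos iA by auto
  define d where "d = \<pi> jB * A / (\<gamma> * lam)"
  have dpos: "d > 0" unfolding d_def using piB A_pos gamma_pos lam by simp
  define el where "el = - 1 / (\<gamma> * B) + d"
  have elden: "1 + \<gamma> * B * el = \<gamma> * B * d"
    unfolding el_def using gamma_pos B_pos by (simp add: field_simps)
  have elJ: "el \<in> Jset \<gamma> n b" using J_iff elden dpos gamma_pos B_pos by simp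
  have Gel: "G el \<ge> lam / A"
  proof -
    have "b jB * \<pi> jB / (1 + \<gamma> * b jB * el) \<le> G el"
      unfolding Gfun_def
    proof (rule member_le_sum[OF jB(1)])
      fix j assume j: "j \<in> {1..n} - {jB}"
      then have "1 + \<gamma> * b j * el > 0" using J_pole[OF elJ] by auto
      moreover have "b j > 0" "\<pi> j > 0" using b_pos pi_pos j by auto
      ultimately show "0 \<le> b j * \<pi> j / (1 + \<gamma> * b j * el)" by simp
    qed simp
    moreover have "b jB * \<pi> jB / (1 + \<gamma> * b jB * el) = lam / A"
      unfolding jB(2) elden d_def using gamma_pos B_pos A_pos lam piB by (simp add: field_simps)
    ultimately show ?thesis by simp
  qed
  have el_lt: "el < e2"
  proof (rule ccontr)
    assume "\<not> el < e2"
    then have "e2 \<le> el" by simp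
    then have "G el \<le> G e2"
      using G_strict_dec[OF e2J, of el] by (cases "e2 = el") auto
    then show False using Gel Ge2 by simp
  qed
  have Gcont: "\<And>x. x \<in> Jset \<gamma> n b \<Longrightarrow> isCont G x"
  proof -
    fix x assume "x \<in> Jset \<gamma> n b"
    then have "\<forall>j\<in>{1..n}. 1 + \<gamma> * b j * x \<noteq> 0" using J_pole by force
    then show "isCont G x" by (rule G_isCont)
  qed
  have "continuous_on {el..e2} G"
  proof (intro continuous_at_imp_continuous_on ballI)
    fix x assume "x \<in> {el..e2}"
    then have "x \<in> Jset \<gamma> n b" using elJ unfolding Jset_def by auto
    then show "isCont G x" using Gcont by blast
  qed
  then obtain e0 where e0: "el \<le> e0" "e0 \<le> e2" "G e0 = lam / A"
    using IVT2'[of G e2 "lam / A" el] Ge2 Gel el_lt by auto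
  have e0J: "e0 \<in> Jset \<gamma> n b" using elJ e0(1) unfolding Jset_def by auto
  have e0_lt: "e0 < e2" using e0 Ge2 by (cases "e0 = e2") auto
  obtain d1 where d1: "d1 > 0" "\<And>h. h > 0 \<Longrightarrow> h < d1 \<Longrightarrow> F (e2 - h) < F e2"
    using DERIV_pos_inc_left[OF derI[OF e2I'] De2] by blast
  define h where "h = min d1 (e2 - e0) / 2"
  have hpos: "h > 0" "h < d1" "h < e2 - e0" unfolding h_def using d1 e0_lt by auto
  define e3 where "e3 = e2 - h"
  have Fe3: "F e3 < 0" using d1(2)[OF hpos(1,2)] Fe2 unfolding e3_def F_def by simp
  have e3: "e0 < e3" "e3 < e2" unfolding e3_def using hpos by auto
  (* F positive just right of e0 *)
  define eps where "eps = \<omega> iA * \<gamma> * B"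
  have epos: "eps > 0" unfolding eps_def using omA gamma_pos B_pos by simp
  obtain d2 where d2: "d2 > 0" "\<And>x. x \<noteq> e0 \<Longrightarrow> norm (x - e0) < d2 \<Longrightarrow> norm (G x - G e0) < eps"
    using Gcont[OF e0J] epos unfolding isCont_def LIM_eq by blast
  define m where "m = min d2 (e3 - e0)"
  have mm: "0 < m" "m \<le> d2" "m \<le> e3 - e0" unfolding m_def using d2(1) e3 by auto
  define e' where "e' = e0 + m / 2"
  have e'a: "e0 < e'" unfolding e'_def using mm(1) by simp
  have e'b: "e' < e3" unfolding e'_def using mm(1,3) by simp
  have e'c: "norm (e' - e0) < d2" unfolding e'_def using mm(1,2) by simp
  note e' = e'a e'b e'c
  have e'J: "e' \<in> Jset \<gamma> n b" using e0J e'(1) unfolding Jset_def by auto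
  have Ge': "G e' < G e0" using G_strict_dec[OF e0J e'(1)] .
  have e'I: "e' \<in> I" unfolding I_def using I_iff e'J Ge' e0(3) by auto
  have Fe': "F e' > 0"
  proof -
    have close: "G e0 - G e' < eps" using d2(2)[of e'] e' Ge' by auto
    have uA: "A * G e' - lam < 0" using I_u[OF e'I[unfolded I_def] iA(1)] iA(2) by simp
    have pos1: "0 < lam - A * G e'" using uA by simp
    have "lam - A * G e' = A * (G e0 - G e')" using e0(3) A_pos by (simp add: field_simps)
    also have "\<dots> < A * eps" using close A_pos by simp
    finally have lt: "lam - A * G e' < A * eps" .
    have "A * \<omega> iA / (A * eps) < A * \<omega> iA / (lam - A * G e')"
      using lt pos1 A_pos omA by (intro divide_strict_left_mono) auto
    moreover have "A * \<omega> iA / (A * eps) = 1 / (\<gamma> * B)"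
      unfolding eps_def using A_pos omA gamma_pos B_pos by (simp add: field_simps)
    moreover have "- (A * \<omega> iA / (A * G e' - lam)) = A * \<omega> iA / (lam - A * G e')"
      by (simp add: minus_divide_right)
    ultimately have big: "1 / (\<gamma> * B) < - (A * \<omega> iA / (A * G e' - lam))"
      by simp
    have "(\<Sum>i\<in>{1..p}. a i * \<omega> i / (a i * G e' - lam)) \<le> a iA * \<omega> iA / (a iA * G e' - lam)"
    proof -
      have "(\<Sum>i\<in>{1..p}. a i * \<omega> i / (a i * G e' - lam))
          = a iA * \<omega> iA / (a iA * G e' - lam) + (\<Sum>i\<in>{1..p} - {iA}. a i * \<omega> i / (a i * G e' - lam))"
        using iA(1) by (simp add: sum.remove)
      moreover have "(\<Sum>i\<in>{1..p} - {iA}. a i * \<omega> i / (a i * G e' - lam)) \<le> 0"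
      proof (rule sum_nonpos)
        fix i assume i: "i \<in> {1..p} - {iA}"
        then have "a i * G e' - lam < 0" using I_u[OF e'I[unfolded I_def]] by auto
        moreover have "a i * \<omega> i > 0" using a_pos omega_pos i by auto
        ultimately show "a i * \<omega> i / (a i * G e' - lam) \<le> 0"
          by (simp add: divide_pos_neg less_imp_le)
      qed
      ultimately show ?thesis by simp
    qed
    then have "F e' \<ge> e' - A * \<omega> iA / (A * G e' - lam)"
      unfolding F_def Ffun_def iA(2) by simp
    moreover have "e' > - 1 / (\<gamma> * B)" using e'J unfolding Jset_def B_def by simp
    ultimately show ?thesis using big by simp
  qed
  have "continuous_on {e'..e3} F"
  proof (intro continuous_at_imp_continuous_on ballI)
    fix x assume "x \<in> {e'..e3}"
    then have "x \<in> I" using convI[OF e'I] by auto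
    then show "isCont F x" using derI DERIV_isCont by blast
  qed
  then obtain e1 where e1: "e' \<le> e1" "e1 \<le> e3" "F e1 = 0"
    using IVT2'[of F e3 0 e'] Fe3 Fe' e' by auto
  have e1I: "e1 \<in> I" using convI[OF e'I e1(1)] .
  have e1_lt: "e1 < e2" using e1 e3 by simp
  have Fe2': "F e2 = 0" using Fe2 unfolding F_def .
  have roots: "{e \<in> I. F e = 0} = {e1, e2}"
  proof
    show "{e1, e2} \<subseteq> {e \<in> I. F e = 0}" using e1I e2I' e1(3) Fe2' by auto
  next
    show "{e \<in> I. F e = 0} \<subseteq> {e1, e2}"
    proof
      fix e assume e: "e \<in> {e \<in> I. F e = 0}"
      show "e \<in> {e1, e2}"
      proof (rule ccontr)
        assume ne: "e \<notin> {e1, e2}"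
        consider "e < e1" | "e1 < e \<and> e < e2" | "e2 < e" using ne e1_lt by force
        then show False
        proof cases
          case 1 then show False
            using three_roots[OF derI convI monoI, where x=e and y=e1 and z=e2] e e1_lt e1(3) Fe2' by auto
        next
          case 2 then show False
            using three_roots[OF derI convI monoI, where x=e1 and y=e and z=e2] e e1I e1(3) Fe2' by auto
        next
          case 3 then show False
            using three_roots[OF derI convI monoI, where x=e1 and y=e2 and z=e] e e1I e1_lt e1(3) Fe2' by auto
        qed
      qed
    qed
  qed
  have d2': "deriv F e2 = D lam e2" using DERIV_imp_deriv[OF derI[OF e2I']] .
  have d1': "deriv F e1 = D lam e1" using DERIV_imp_deriv[OF derI[OF e1I]] .
  have "D lam e1 < 0" using rolle_mono[OF derI convI monoI e1I e1_lt] e1(3) Fe2' by auto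
  then have derivs: "\<forall>e\<in>{e1, e2}. deriv F e > 0 \<longleftrightarrow> e = e2"
    using d1' d2' De2 e1_lt by auto
  show ?thesis using e1_lt roots derivs unfolding F_def I_def by blast
qed

end


context mtsetup begin

lemma ident:
  assumes u: "\<forall>i\<in>{1..p}. a i * G e \<noteq> lam" and F: "Ffun \<gamma> p a \<omega> n b \<pi> lam e = 0"
  shows "e * G e = 1 + lam * (\<Sum>i\<in>{1..p}. \<omega> i / (a i * G e - lam))"
proof -
  have e: "e = (\<Sum>i\<in>{1..p}. a i * \<omega> i / (a i * G e - lam))"
    using F unfolding Ffun_def by simp
  have "e * G e = (\<Sum>i\<in>{1..p}. a i * \<omega> i / (a i * G e - lam) * G e)"
    by (subst e) (simp add: sum_distrib_right)
  also have "\<dots> = (\<Sum>i\<in>{1..p}. \<omega> i + lam * (\<omega> i / (a i * G e - lam)))"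
  proof (rule sum.cong)
    fix i assume i: "i \<in> {1..p}"
    then have nz: "a i * G e - lam \<noteq> 0" using u by auto
    show "a i * \<omega> i / (a i * G e - lam) * G e = \<omega> i + lam * (\<omega> i / (a i * G e - lam))"
      using nz by (simp add: field_simps)
  qed simp
  also have "\<dots> = 1 + lam * (\<Sum>i\<in>{1..p}. \<omega> i / (a i * G e - lam))"
  proof -
    have os: "sum \<omega> {Suc 0..p} = 1" using omega_sum by simp
    show ?thesis by (simp add: sum.distrib sum_distrib_left os)
  qed
  finally show ?thesis .
qed

lemma ee_bound:
  assumes lam: "lam > 0" and u: "\<forall>i\<in>{1..p}. a i * G e \<noteq> lam"
    and F: "Ffun \<gamma> p a \<omega> n b \<pi> lam e = 0"
    and s: "\<bar>1 + lam * (\<Sum>i\<in>{1..p}. \<omega> i / (a i * G e - lam))\<bar> \<le> 1"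
  shows "\<bar>e\<bar> \<le> 2 * A / lam"
proof (cases "\<bar>G e\<bar> \<le> lam / (2 * A)")
  case True
  have e: "e = (\<Sum>i\<in>{1..p}. a i * \<omega> i / (a i * G e - lam))"
    using F unfolding Ffun_def by simp
  have "\<bar>e\<bar> \<le> (\<Sum>i\<in>{1..p}. \<bar>a i * \<omega> i / (a i * G e - lam)\<bar>)"
    by (subst e) (rule sum_abs)
  also have "\<dots> \<le> (\<Sum>i\<in>{1..p}. \<omega> i * (2 * A / lam))"
  proof (rule sum_mono)
    fix i assume i: "i \<in> {1..p}"
    have ai: "a i > 0" "\<omega> i > 0" "a i \<le> A" using a_pos omega_pos A_ge i by auto
    have "\<bar>a i * G e\<bar> \<le> A * (lam / (2 * A))"
    proof -
      have "a i * \<bar>G e\<bar> \<le> A * (lam / (2 * A))"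
        using True ai A_pos by (intro mult_mono) auto
      then show ?thesis using ai by (simp add: abs_mult)
    qed
    also have "\<dots> = lam / 2" using A_pos by simp
    finally have "\<bar>a i * G e\<bar> \<le> lam / 2" .
    then have ul: "lam / 2 \<le> \<bar>a i * G e - lam\<bar>" by linarith
    have "\<bar>a i * \<omega> i / (a i * G e - lam)\<bar> = a i * \<omega> i / \<bar>a i * G e - lam\<bar>"
      using ai by (simp add: abs_divide abs_mult)
    also have "\<dots> \<le> a i * \<omega> i / (lam / 2)"
    proof -
      have "\<bar>a i * G e - lam\<bar> > 0" using ul lam by linarith
      then have "0 < \<bar>a i * G e - lam\<bar> * (lam / 2)" using lam by simp
      then show ?thesis using ul ai by (intro divide_left_mono) auto
    qed
    also have "\<dots> \<le> A * \<omega> i / (lam / 2)"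
      using ai lam by (intro divide_right_mono mult_right_mono) auto
    also have "\<dots> = \<omega> i * (2 * A / lam)" by simp
    finally show "\<bar>a i * \<omega> i / (a i * G e - lam)\<bar> \<le> \<omega> i * (2 * A / lam)" .
  qed
  also have "\<dots> = (\<Sum>i\<in>{1..p}. \<omega> i) * (2 * A / lam)" by (rule sum_distrib_right[symmetric])
  also have "\<dots> = 2 * A / lam" using omega_sum by simp
  finally show ?thesis .
next
  case False
  have gpos: "\<bar>G e\<bar> > lam / (2 * A)" using False by simp
  have lp: "lam / (2 * A) > 0" using lam A_pos by simp
  have "\<bar>e * G e\<bar> \<le> 1" using ident[OF u F] s by simp
  then have "\<bar>e\<bar> * \<bar>G e\<bar> \<le> 1" by (simp add: abs_mult)
  then have "\<bar>e\<bar> \<le> 1 / \<bar>G e\<bar>" using gpos lp by (simp add: pos_le_divide_eq)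
  also have "\<dots> \<le> 1 / (lam / (2 * A))"
  proof -
    have "0 < \<bar>G e\<bar> * (lam / (2 * A))" using gpos lp by (intro mult_pos_pos) auto
    then show ?thesis using gpos by (intro divide_left_mono) auto
  qed
  also have "\<dots> = 2 * A / lam" by simp
  finally show ?thesis .
qed

end


context mtsetup begin

lemma good_lam0:
  assumes lam: "lam \<ge> 4 * A * B * (1 + \<gamma>) + 1" and e: "\<bar>e\<bar> \<le> 2 * A / lam"
  shows "1 + \<gamma> * B * e > 0 \<and> lam - A * G e > 0 \<and> D lam e > 0"
proof -
  have AB: "A * B > 0" using A_pos B_pos by simp
  have gAB: "\<gamma> * A * B > 0" using mult_pos_pos[OF gamma_pos AB] by (simp add: mult.assoc)
  have eq4: "4 * A * B * (1 + \<gamma>) = 4 * A * B + 4 * (\<gamma> * A * B)" by (simp add: algebra_simps)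
  have l1: "lam \<ge> 4 * (\<gamma> * A * B)" using lam eq4 AB by linarith
  have l2: "lam > 4 * (A * B)" using lam eq4 gAB by linarith
  have lp: "lam > 0" using l2 AB by linarith
  have small: "\<gamma> * B * \<bar>e\<bar> \<le> 1 / 2"
  proof -
    have "\<gamma> * B * \<bar>e\<bar> \<le> \<gamma> * B * (2 * A / lam)"
      using e gamma_pos B_pos by (intro mult_left_mono) auto
    also have "\<dots> = 2 * (\<gamma> * A * B) / lam" by simp
    also have "\<dots> \<le> 1 / 2" using l1 lp by (simp add: divide_le_eq)
    finally show ?thesis .
  qed
  have pole: "\<And>j. j \<in> {1..n} \<Longrightarrow> 1 + \<gamma> * b j * e \<ge> 1 / 2"
  proof -
    fix j assume j: "j \<in> {1..n}"
    have bj: "0 < b j" "b j \<le> B" using b_pos B_ge j by auto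
    have "\<bar>\<gamma> * b j * e\<bar> = \<gamma> * b j * \<bar>e\<bar>" using gamma_pos bj by (simp add: abs_mult)
    also have "\<dots> \<le> \<gamma> * B * \<bar>e\<bar>" using gamma_pos bj by (intro mult_right_mono mult_left_mono) auto
    finally have "\<bar>\<gamma> * b j * e\<bar> \<le> 1 / 2" using small by simp
    then show "1 + \<gamma> * b j * e \<ge> 1 / 2" by linarith
  qed
  have c1: "1 + \<gamma> * B * e > 0"
  proof -
    have "\<bar>\<gamma> * B * e\<bar> \<le> 1 / 2" using small gamma_pos B_pos by (simp add: abs_mult)
    then show ?thesis by linarith
  qed
  have eJ: "e \<in> Jset \<gamma> n b" using J_iff c1 by simp
  have Gpos: "G e > 0" using G_pos[OF eJ] .
  have Gle: "G e \<le> 2 * B"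
  proof -
    have "G e \<le> (\<Sum>j\<in>{1..n}. \<pi> j * (2 * B))"
      unfolding Gfun_def
    proof (rule sum_mono)
      fix j assume j: "j \<in> {1..n}"
      have bj: "0 < b j" "b j \<le> B" "0 < \<pi> j" using b_pos B_ge pi_pos j by auto
      have "b j * \<pi> j / (1 + \<gamma> * b j * e) \<le> b j * \<pi> j / (1 / 2)"
        using pole[OF j] bj by (intro divide_left_mono) auto
      also have "\<dots> \<le> \<pi> j * (2 * B)" using bj by simp
      finally show "b j * \<pi> j / (1 + \<gamma> * b j * e) \<le> \<pi> j * (2 * B)" .
    qed
    also have "\<dots> = (\<Sum>j\<in>{1..n}. \<pi> j) * (2 * B)" by (rule sum_distrib_right[symmetric])
    finally show ?thesis using pi_sum by simp
  qed
  have AG: "A * G e \<le> 2 * (A * B)" using Gle A_pos by simp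
  have c2: "lam - A * G e > lam / 2" using AG l2 by linarith
  have Kle: "K e \<le> 4 * \<gamma> * B ^ 2"
  proof -
    have "K e \<le> (\<Sum>j\<in>{1..n}. \<pi> j * (4 * \<gamma> * B ^ 2))"
      unfolding K_def
    proof (rule sum_mono)
      fix j assume j: "j \<in> {1..n}"
      have bj: "0 < b j" "b j \<le> B" "0 < \<pi> j" using b_pos B_ge pi_pos j by auto
      have sq: "(1 / 2) ^ 2 \<le> (1 + \<gamma> * b j * e) ^ 2" using pole[OF j] by (intro power_mono) auto
      have "\<gamma> * b j ^ 2 * \<pi> j / (1 + \<gamma> * b j * e) ^ 2 \<le> \<gamma> * b j ^ 2 * \<pi> j / ((1 / 2) ^ 2)"
      proof -
        have "0 < (1 + \<gamma> * b j * e) ^ 2" using pole[OF j] by simp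
        then have "0 < (1 + \<gamma> * b j * e) ^ 2 * (1 / 2) ^ 2" by simp
        then show ?thesis using sq bj gamma_pos by (intro divide_left_mono) auto
      qed
      also have "\<dots> = \<pi> j * (4 * \<gamma> * b j ^ 2)" by (simp add: power2_eq_square)
      also have "\<dots> \<le> \<pi> j * (4 * \<gamma> * B ^ 2)"
        using bj gamma_pos by (intro mult_left_mono power_mono) auto
      finally show "\<gamma> * b j ^ 2 * \<pi> j / (1 + \<gamma> * b j * e) ^ 2 \<le> \<pi> j * (4 * \<gamma> * B ^ 2)" .
    qed
    also have "\<dots> = (\<Sum>j\<in>{1..n}. \<pi> j) * (4 * \<gamma> * B ^ 2)" by (rule sum_distrib_right[symmetric])
    finally show ?thesis using pi_sum by simp
  qed
  have Kpos: "K e > 0" using K_pos[OF eJ] .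
  define C where "C = 16 * \<gamma> * A ^ 2 * B ^ 2 / lam ^ 2"
  have sumle: "(\<Sum>i\<in>{1..p}. a i ^ 2 * \<omega> i * K e / (a i * G e - lam) ^ 2) \<le> (\<Sum>i\<in>{1..p}. \<omega> i * C)"
  proof (rule sum_mono)
    fix i assume i: "i \<in> {1..p}"
    have ai: "0 < a i" "a i \<le> A" "0 < \<omega> i" using a_pos A_ge omega_pos i by auto
    have "a i * G e \<le> A * G e" using ai Gpos by simp
    then have ui: "lam - a i * G e > lam / 2" using c2 by linarith
    have usq: "(lam / 2) ^ 2 \<le> (a i * G e - lam) ^ 2"
    proof -
      have "(lam / 2) ^ 2 \<le> (lam - a i * G e) ^ 2" using ui lp by (intro power_mono) auto
      then show ?thesis by (simp add: power2_commute)
    qed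
    have num: "a i ^ 2 * \<omega> i * K e \<le> A ^ 2 * \<omega> i * (4 * \<gamma> * B ^ 2)"
    proof -
      have "a i ^ 2 \<le> A ^ 2" using ai by (intro power_mono) auto
      then have "a i ^ 2 * \<omega> i \<le> A ^ 2 * \<omega> i" using ai by simp
      then show ?thesis using Kle Kpos ai by (intro mult_mono) auto
    qed
    have "a i ^ 2 * \<omega> i * K e / (a i * G e - lam) ^ 2 \<le> A ^ 2 * \<omega> i * (4 * \<gamma> * B ^ 2) / ((lam / 2) ^ 2)"
      using num usq lp ai gamma_pos by (intro frac_le) auto
    also have "\<dots> = \<omega> i * C" unfolding C_def using lp by (simp add: field_simps power2_eq_square)
    finally show "a i ^ 2 * \<omega> i * K e / (a i * G e - lam) ^ 2 \<le> \<omega> i * C" .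
  qed
  also have "\<dots> = (\<Sum>i\<in>{1..p}. \<omega> i) * C" by (rule sum_distrib_right[symmetric])
  also have "\<dots> = C" using omega_sum by simp
  also have "C < 1"
  proof -
    have "16 * \<gamma> * A ^ 2 * B ^ 2 < lam ^ 2"
    proof -
      have "(4 * A * B * (1 + \<gamma>)) ^ 2 \<le> lam ^ 2"
        using lam AB gamma_pos by (intro power_mono) auto
      moreover have "16 * \<gamma> * A ^ 2 * B ^ 2 < (4 * A * B * (1 + \<gamma>)) ^ 2"
      proof -
        have "(4 * A * B * (1 + \<gamma>)) ^ 2 = 16 * (A * B) ^ 2 * (1 + \<gamma>) ^ 2"
          by (simp add: power_mult_distrib)
        moreover have "\<gamma> < (1 + \<gamma>) ^ 2"
        proof -
          have "0 < \<gamma> * \<gamma>" using gamma_pos by simp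
          moreover have "(1 + \<gamma>) ^ 2 = 1 + 2 * \<gamma> + \<gamma> * \<gamma>" by (simp add: power2_eq_square algebra_simps)
          ultimately show ?thesis using gamma_pos by linarith
        qed
        moreover have "(A * B) ^ 2 > 0" using A_pos B_pos by simp
        ultimately have "16 * (A * B) ^ 2 * \<gamma> < 16 * (A * B) ^ 2 * (1 + \<gamma>) ^ 2"
          by (intro mult_strict_left_mono) auto
        then show ?thesis by (simp add: power_mult_distrib ac_simps)
      qed
      ultimately show ?thesis by linarith
    qed
    then show ?thesis unfolding C_def using lp by simp
  qed
  finally have "D lam e > 0" unfolding D_def by simp
  then show ?thesis using c1 c2 lp by simp
qed

end


context mtsetup begin

lemma D_nonzero:
  fixes ee :: "real \<Rightarrow> real" and L :: real
  assumes lam: "lam > L"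
    and diff: "ee differentiable (at lam)"
    and pole: "\<forall>j\<in>{1..n}. 1 + \<gamma> * b j * ee lam \<noteq> 0"
    and nons: "\<forall>i\<in>{1..p}. a i * G (ee lam) \<noteq> lam"
    and root: "\<forall>l>L. Ffun \<gamma> p a \<omega> n b \<pi> l (ee l) = 0"
  shows "D lam (ee lam) \<noteq> 0"
proof -
  define e where "e = ee lam"
  define E where "E = deriv ee lam"
  have dee: "(ee has_real_derivative E) (at lam)"
    unfolding E_def using diff DERIV_deriv_iff_real_differentiable by blast
  have GE: "((\<lambda>l. G (ee l)) has_real_derivative (- K e * E)) (at lam)"
    unfolding e_def using DERIV_chain2[OF G_deriv[OF pole] dee] .
  have Phid: "((\<lambda>l. ee l - (\<Sum>i\<in>{1..p}. a i * \<omega> i / (a i * G (ee l) - l))) has_real_derivative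
      E - (\<Sum>i\<in>{1..p}. a i * \<omega> i * (a i * K e * E + 1) / (a i * G e - lam) ^ 2)) (at lam)"
  proof (intro derivative_intros DERIV_sum dee)
    fix i assume i: "i \<in> {1..p}"
    have nz: "a i * G e - lam \<noteq> 0" using nons i unfolding e_def by auto
    have ud: "((\<lambda>l. a i * G (ee l) - l) has_real_derivative a i * (- K e * E) - 1) (at lam)"
      by (intro DERIV_diff DERIV_cmult GE DERIV_ident)
    have nz': "a i * G (ee lam) - lam \<noteq> 0" using nz unfolding e_def .
    have inv: "((\<lambda>l. inverse (a i * G (ee l) - l)) has_real_derivative
        - ((a i * (- K e * E) - 1) * inverse ((a i * G (ee lam) - lam) ^ Suc (Suc 0)))) (at lam)"
      by (rule DERIV_inverse_fun[OF ud nz'])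
    have cm: "((\<lambda>l. a i * \<omega> i * inverse (a i * G (ee l) - l)) has_real_derivative
        a i * \<omega> i * (- ((a i * (- K e * E) - 1) * inverse ((a i * G (ee lam) - lam) ^ Suc (Suc 0))))) (at lam)"
      by (rule DERIV_cmult[OF inv])
    have eqd: "a i * \<omega> i * (- ((a i * (- K e * E) - 1) * inverse ((a i * G (ee lam) - lam) ^ Suc (Suc 0))))
        = a i * \<omega> i * (a i * K e * E + 1) / (a i * G e - lam) ^ 2"
      unfolding e_def by (simp add: divide_inverse algebra_simps numeral_2_eq_2)
    have fe: "(\<lambda>l. a i * \<omega> i * inverse (a i * G (ee l) - l)) = (\<lambda>l. a i * \<omega> i / (a i * G (ee l) - l))"
      by (simp add: divide_inverse)
    show "((\<lambda>l. a i * \<omega> i / (a i * G (ee l) - l)) has_real_derivative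
        a i * \<omega> i * (a i * K e * E + 1) / (a i * G e - lam) ^ 2) (at lam)"
      using cm unfolding fe eqd .
  qed
  have Phi0: "((\<lambda>l. ee l - (\<Sum>i\<in>{1..p}. a i * \<omega> i / (a i * G (ee l) - l))) has_real_derivative 0) (at lam)"
  proof (rule has_field_derivative_transform_within_open[of "\<lambda>l. 0" 0 lam "{L<..}"])
    show "((\<lambda>l. 0) has_real_derivative 0) (at lam)" by simp
    show "open {L<..}" by simp
    show "lam \<in> {L<..}" using lam by simp
    fix x assume "x \<in> {L<..}"
    then show "0 = ee x - (\<Sum>i\<in>{1..p}. a i * \<omega> i / (a i * G (ee x) - x))"
      using root unfolding Ffun_def by auto
  qed
  have eq0: "E - (\<Sum>i\<in>{1..p}. a i * \<omega> i * (a i * K e * E + 1) / (a i * G e - lam) ^ 2) = 0"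
    using DERIV_unique[OF Phid Phi0] .
  define P where "P = (\<Sum>i\<in>{1..p}. a i * \<omega> i / (a i * G e - lam) ^ 2)"
  have Ppos: "P > 0" unfolding P_def
  proof (rule sum_pos)
    fix i assume i: "i \<in> {1..p}"
    have nz: "a i * G e - lam \<noteq> 0" using nons i unfolding e_def by auto
    have "a i * \<omega> i > 0" using a_pos omega_pos i by auto
    then show "0 < a i * \<omega> i / (a i * G e - lam) ^ 2" using nz by simp
  qed (use p_ne in auto)
  have "(\<Sum>i\<in>{1..p}. a i * \<omega> i * (a i * K e * E + 1) / (a i * G e - lam) ^ 2)
      = E * (\<Sum>i\<in>{1..p}. a i ^ 2 * \<omega> i * K e / (a i * G e - lam) ^ 2) + P"
    unfolding P_def sum_distrib_left sum.distrib[symmetric]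
    by (rule sum.cong) (simp_all add: divide_inverse algebra_simps power2_eq_square)
  then have "E * D lam e = P" using eq0 unfolding D_def by (simp add: algebra_simps)
  then show ?thesis using Ppos unfolding e_def by auto
qed

end


lemma support_AE_le:
  fixes M :: "real measure" and L :: real
  assumes P: "prob_space M" and sb: "sets M = sets borel"
    and sup: "\<forall>t\<in>msupport M. t \<le> L"
  shows "AE t in M. t \<le> L"
proof -
  define F where "F = {ball x r | x r. r > 0 \<and> emeasure M (ball x r) = 0}"
  have opF: "\<And>S. S \<in> F \<Longrightarrow> open S" unfolding F_def by auto
  obtain F' where F': "F' \<subseteq> F" "countable F'" "\<Union>F' = \<Union>F"
    using Lindelof[of F, OF opF] by blast
  have cov: "{L<..} \<subseteq> \<Union>F"
  proof
    fix x assume "x \<in> {L<..}"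
    then have "x \<notin> msupport M" using sup by force
    then obtain r where r: "r > 0" "\<not> emeasure M (ball x r) > 0"
      unfolding msupport_def by auto
    then have "emeasure M (ball x r) = 0" by (simp add: not_gr_zero)
    then have "ball x r \<in> F" using r unfolding F_def by blast
    then show "x \<in> \<Union>F" using r(1) by (meson UnionI centre_in_ball)
  qed
  have null: "\<Union>F' \<in> null_sets M"
  proof (rule null_sets_UN'[of F' "\<lambda>S. S", simplified])
    show "countable F'" by fact
    fix S assume "S \<in> F'"
    then have "S \<in> F" using F' by auto
    then obtain x r where "S = ball x r" "emeasure M (ball x r) = 0" unfolding F_def by auto
    moreover have "ball x r \<in> sets M" using sb by simp
    ultimately show "S \<in> null_sets M" by auto
  qed
  show ?thesis
  proof (rule AE_I'[OF null])
    have c1: "{x \<in> space M. \<not> x \<le> L} \<subseteq> {L<..}" by auto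
    have c2: "{L<..} \<subseteq> \<Union>F'" using cov F'(3) by simp
    show "{x \<in> space M. \<not> x \<le> L} \<subseteq> \<Union>F'" using c1 c2 by (rule subset_trans)
  qed
qed

lemma stieltjes_bounds:
  fixes M :: "real measure" and L lam :: real
  assumes P: "prob_space M" and sb: "sets M = sets borel"
    and sup: "\<forall>t\<in>msupport M. t \<le> L" and L: "L > 0" and lam: "lam \<ge> 2 * L"
  shows "- 2 / lam \<le> stieltjes M lam \<and> stieltjes M lam \<le> 0"
proof -
  interpret prob_space M by fact
  have AE: "AE t in M. t \<le> L" by (rule support_AE_le[OF P sb sup])
  have lp: "lam > 0" using L lam by simp
  have bnd: "AE t in M. - 2 / lam \<le> 1 / (t - lam) \<and> 1 / (t - lam) \<le> 0"
  proof (rule AE_mp[OF AE], rule AE_I2, rule impI)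
    fix t assume t: "t \<le> L"
    then have h: "t - lam \<le> - lam / 2" using lam by simp
    have neg: "t - lam < 0" using h lp by simp
    have "1 / (t - lam) \<le> 0" using neg by simp
    moreover have "- 2 / lam \<le> 1 / (t - lam)"
    proof -
      have "1 / (t - lam) = - (1 / (lam - t))" using neg by (simp add: divide_simps)
      moreover have "1 / (lam - t) \<le> 1 / (lam / 2)"
        using h lp by (intro divide_left_mono) auto
      ultimately show ?thesis by simp
    qed
    ultimately show "- 2 / lam \<le> 1 / (t - lam) \<and> 1 / (t - lam) \<le> 0" by simp
  qed
  have meas: "(\<lambda>t. 1 / (t - lam)) \<in> borel_measurable M"
    unfolding measurable_cong_sets[OF sb refl] by measurable
  have int: "integrable M (\<lambda>t. 1 / (t - lam))"
  proof (rule integrable_const_bound[where B="2/lam"])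
    have aux: "\<And>v::real. - 2 / lam \<le> v \<Longrightarrow> v \<le> 0 \<Longrightarrow> norm v \<le> 2 / lam"
      using lp by (simp add: abs_if)
    show "AE x in M. norm (1 / (x - lam)) \<le> 2 / lam"
      using bnd by eventually_elim (use aux in blast)
  qed (rule meas)
  have "(\<integral>t. - 2 / lam \<partial>M) \<le> (\<integral>t. 1 / (t - lam) \<partial>M)"
    by (rule integral_mono_AE[OF _ int]) (use bnd in auto)
  moreover have "(\<integral>t. 1 / (t - lam) \<partial>M) \<le> (\<integral>t. 0 \<partial>M)"
    by (rule integral_mono_AE[OF int]) (use bnd in auto)
  ultimately show ?thesis unfolding stieltjes_def by (simp add: prob_space)
qed


theorem mainTheorem15:
  fixes \<gamma> :: real and p n :: nat and a \<omega> b \<pi> :: "nat \<Rightarrow> real"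
    and \<mu> :: "real measure" and lamstar :: real and ee :: "real \<Rightarrow> real"
  assumes gamma_pos: "\<gamma> > 0"
    and a_pos: "\<forall>i\<in>{1..p}. a i > 0" and omega_pos: "\<forall>i\<in>{1..p}. \<omega> i > 0"
    and omega_sum: "(\<Sum>i\<in>{1..p}. \<omega> i) = 1"
    and b_pos: "\<forall>j\<in>{1..n}. b j > 0" and pi_pos: "\<forall>j\<in>{1..n}. \<pi> j > 0"
    and pi_sum: "(\<Sum>j\<in>{1..n}. \<pi> j) = 1"
    and mu_prob: "prob_space \<mu>" and mu_borel: "sets \<mu> = sets borel"
    and mu_compact: "compact (msupport \<mu>)"
    and mu_nonneg: "msupport \<mu> \<subseteq> {0..}"
    and lamstar_endpoint: "lamstar \<in> msupport \<mu>" "\<forall>t\<in>msupport \<mu>. t \<le> lamstar"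
    and lamstar_pos: "lamstar > 0"
    and ee_smooth: "\<forall>lam>lamstar. \<forall>k. (deriv ^^ k) ee differentiable (at lam)"
    and ee_nopole: "\<forall>lam>lamstar. \<forall>j\<in>{1..n}. 1 + \<gamma> * b j * ee lam \<noteq> 0"
    and ee_nonsing: "\<forall>lam>lamstar. \<forall>i\<in>{1..p}. a i * Gfun \<gamma> n b \<pi> (ee lam) \<noteq> lam"
    and ee_stieltjes: "\<forall>lam>lamstar. stieltjes \<mu> lam =
           (\<Sum>i\<in>{1..p}. \<omega> i / (a i * Gfun \<gamma> n b \<pi> (ee lam) - lam))"
    and ee_root: "\<forall>lam>lamstar. Ffun \<gamma> p a \<omega> n b \<pi> lam (ee lam) = 0"
  shows "\<forall>lam>lamstar. \<exists>e1 e2. e1 < e2 \<and> e2 < 0 \<and>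
           {e \<in> Iset \<gamma> p a n b \<pi> lam. Ffun \<gamma> p a \<omega> n b \<pi> lam e = 0} = {e1, e2} \<and>
           ee lam = e2 \<and>
           (\<forall>e\<in>{e1, e2}. deriv (Ffun \<gamma> p a \<omega> n b \<pi> lam) e > 0 \<longleftrightarrow> e = e2)"
proof -
  interpret M: mtsetup \<gamma> p n a \<omega> b \<pi>
    by unfold_locales (use gamma_pos a_pos omega_pos omega_sum b_pos pi_pos pi_sum in auto)
  have diffee: "\<And>lam. lam > lamstar \<Longrightarrow> ee differentiable (at lam)"
  proof -
    fix lam :: real assume "lam > lamstar"
    then have "(deriv ^^ 0) ee differentiable (at lam)" using ee_smooth by blast
    then show "ee differentiable (at lam)" by simp
  qed
  have contee: "\<And>lam. lam > lamstar \<Longrightarrow> isCont ee lam"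
    using diffee differentiable_imp_continuous_within by blast
  have contG: "\<And>lam. lam > lamstar \<Longrightarrow> isCont (\<lambda>l. Gfun \<gamma> n b \<pi> (ee l)) lam"
  proof -
    fix lam :: real assume l: "lam > lamstar"
    show "isCont (\<lambda>l. Gfun \<gamma> n b \<pi> (ee l)) lam"
      using isCont_o2[OF contee[OF l] M.G_isCont] ee_nopole l by blast
  qed
  have contK: "\<And>lam. lam > lamstar \<Longrightarrow> isCont (\<lambda>l. M.K (ee l)) lam"
  proof -
    fix lam :: real assume l: "lam > lamstar"
    show "isCont (\<lambda>l. M.K (ee l)) lam"
      using isCont_o2[OF contee[OF l] M.K_isCont] ee_nopole l by blast
  qed
  have Dnz: "\<And>lam. lam > lamstar \<Longrightarrow> M.D lam (ee lam) \<noteq> 0"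
  proof -
    fix lam :: real assume l: "lam > lamstar"
    show "M.D lam (ee lam) \<noteq> 0"
    proof (rule M.D_nonzero[of lamstar lam ee])
      show "lamstar < lam" by fact
      show "ee differentiable (at lam)" using diffee l .
      show "\<forall>j\<in>{1..n}. 1 + \<gamma> * b j * ee lam \<noteq> 0" using ee_nopole l by blast
      show "\<forall>i\<in>{1..p}. a i * Gfun \<gamma> n b \<pi> (ee lam) \<noteq> lam" using ee_nonsing l by blast
      show "\<forall>l>lamstar. Ffun \<gamma> p a \<omega> n b \<pi> l (ee l) = 0" using ee_root by blast
    qed
  qed
  obtain jB where jB: "jB \<in> {1..n}" "b jB = M.B" using M.B_in by blast
  obtain iA where iA: "iA \<in> {1..p}" "a iA = M.A" using M.A_in by blast
  define l0 where "l0 = 2 * lamstar + 4 * M.A * M.B * (1 + \<gamma>) + 1"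
  have ABg: "4 * M.A * M.B * (1 + \<gamma>) > 0" using M.A_pos M.B_pos gamma_pos by simp
  have l0a1: "l0 > lamstar" unfolding l0_def using ABg lamstar_pos by linarith
  have l0a2: "l0 \<ge> 2 * lamstar" unfolding l0_def using ABg lamstar_pos by linarith
  have l0a3: "l0 \<ge> 4 * M.A * M.B * (1 + \<gamma>) + 1" unfolding l0_def using ABg lamstar_pos by linarith
  have l0a4: "l0 > 0" unfolding l0_def using ABg lamstar_pos by linarith
  note l0a = l0a1 l0a2 l0a3 l0a4
  have good0: "1 + \<gamma> * M.B * ee l0 > 0 \<and> l0 - M.A * Gfun \<gamma> n b \<pi> (ee l0) > 0 \<and> M.D l0 (ee l0) > 0"
  proof (rule M.good_lam0[OF l0a(3)])
    define s where "s = (\<Sum>i\<in>{1..p}. \<omega> i / (a i * Gfun \<gamma> n b \<pi> (ee l0) - l0))"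
    have sb: "- 2 / l0 \<le> s \<and> s \<le> 0"
      using stieltjes_bounds[OF mu_prob mu_borel lamstar_endpoint(2) lamstar_pos l0a(2)]
        ee_stieltjes l0a(1) unfolding s_def by auto
    have "l0 * (- 2 / l0) \<le> l0 * s" using sb l0a(4) by (intro mult_left_mono) auto
    then have "- 2 \<le> l0 * s" using l0a(4) by simp
    moreover have "l0 * s \<le> 0" using sb l0a(4) by (simp add: mult_nonneg_nonpos)
    ultimately have sabs: "\<bar>1 + l0 * s\<bar> \<le> 1" by linarith
    show "\<bar>ee l0\<bar> \<le> 2 * M.A / l0"
    proof (rule M.ee_bound[OF l0a(4)])
      show "\<forall>i\<in>{1..p}. a i * Gfun \<gamma> n b \<pi> (ee l0) \<noteq> l0" using ee_nonsing l0a(1) by blast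
      show "Ffun \<gamma> p a \<omega> n b \<pi> l0 (ee l0) = 0" using ee_root l0a(1) by blast
      show "\<bar>1 + l0 * (\<Sum>i\<in>{1..p}. \<omega> i / (a i * Gfun \<gamma> n b \<pi> (ee l0) - l0))\<bar> \<le> 1"
        using sabs unfolding s_def .
    qed
  qed
  have P1: "\<And>lam. lam > lamstar \<Longrightarrow> 1 + \<gamma> * M.B * ee lam > 0"
  proof -
    fix lam :: real assume l: "lam > lamstar"
    show "1 + \<gamma> * M.B * ee lam > 0"
    proof -
      have c: "\<And>x. x > lamstar \<Longrightarrow> isCont (\<lambda>l. 1 + \<gamma> * M.B * ee l) x"
        using contee by (intro continuous_intros) auto
      have nz: "\<And>x. x > lamstar \<Longrightarrow> 1 + \<gamma> * M.B * ee x \<noteq> 0" using ee_nopole jB by force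
      have pos: "1 + \<gamma> * M.B * ee l0 > 0" using good0 by blast
      show ?thesis using sign_const[OF c nz l0a(1), of lam] pos l by simp
    qed
  qed
  have P2: "\<And>lam. lam > lamstar \<Longrightarrow> lam - M.A * Gfun \<gamma> n b \<pi> (ee lam) > 0"
  proof -
    fix lam :: real assume l: "lam > lamstar"
    show "lam - M.A * Gfun \<gamma> n b \<pi> (ee lam) > 0"
    proof -
      have c: "\<And>x. x > lamstar \<Longrightarrow> isCont (\<lambda>l. l - M.A * Gfun \<gamma> n b \<pi> (ee l)) x"
        using contG by (intro continuous_intros) auto
      have nz: "\<And>x. x > lamstar \<Longrightarrow> x - M.A * Gfun \<gamma> n b \<pi> (ee x) \<noteq> 0"
      proof -
        fix x :: real assume x: "x > lamstar"
        have "a iA * Gfun \<gamma> n b \<pi> (ee x) \<noteq> x" using ee_nonsing x iA(1) by blast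
        then show "x - M.A * Gfun \<gamma> n b \<pi> (ee x) \<noteq> 0" using iA(2) by simp
      qed
      have pos: "l0 - M.A * Gfun \<gamma> n b \<pi> (ee l0) > 0" using good0 by blast
      show ?thesis using sign_const[OF c nz l0a(1), of lam] pos l by simp
    qed
  qed
  have P3: "\<And>lam. lam > lamstar \<Longrightarrow> M.D lam (ee lam) > 0"
  proof -
    fix lam :: real assume l: "lam > lamstar"
    show "M.D lam (ee lam) > 0"
    proof -
      have c: "\<And>x. x > lamstar \<Longrightarrow> isCont (\<lambda>l. M.D l (ee l)) x"
      proof -
        fix x :: real assume x: "x > lamstar"
        have nz: "\<forall>i\<in>{1..p}. a i * Gfun \<gamma> n b \<pi> (ee x) - x \<noteq> 0" using ee_nonsing x by force
        show "isCont (\<lambda>l. M.D l (ee l)) x" unfolding M.D_def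
          using contG[OF x] contK[OF x] nz by (auto intro!: continuous_intros)
      qed
      have pos: "M.D l0 (ee l0) > 0" using good0 by blast
      show ?thesis using sign_const[OF c Dnz l0a(1), of lam] pos l by simp
    qed
  qed
  show ?thesis
  proof (intro allI impI)
    fix lam :: real assume l: "lam > lamstar"
    define e2 where "e2 = ee lam"
    have lp: "lam > 0" using l lamstar_pos by simp
    have e2J: "e2 \<in> Jset \<gamma> n b" using P1[OF l] M.J_iff unfolding e2_def by simp
    have Ge2: "Gfun \<gamma> n b \<pi> e2 < lam / M.A"
      using P2[OF l] M.A_pos unfolding e2_def by (simp add: less_divide_eq mult.commute)
    have e2I: "e2 \<in> Iset \<gamma> p a n b \<pi> lam" using M.I_iff e2J Ge2 by simp
    have Fe2: "Ffun \<gamma> p a \<omega> n b \<pi> lam e2 = 0" using ee_root l unfolding e2_def by blast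
    have De2: "M.D lam e2 > 0" using P3[OF l] unfolding e2_def .
    have neg: "e2 < 0"
    proof -
      have "e2 = (\<Sum>i\<in>{1..p}. a i * \<omega> i / (a i * Gfun \<gamma> n b \<pi> e2 - lam))"
        using Fe2 unfolding Ffun_def by simp
      also have "\<dots> < (\<Sum>i\<in>{1..p}. 0)"
      proof (rule sum_strict_mono)
        fix i assume i: "i \<in> {1..p}"
        have "a i * Gfun \<gamma> n b \<pi> e2 - lam < 0" using M.I_u[OF e2I i] by simp
        moreover have "a i * \<omega> i > 0" using a_pos omega_pos i by auto
        ultimately show "a i * \<omega> i / (a i * Gfun \<gamma> n b \<pi> e2 - lam) < 0"
          by (simp add: divide_pos_neg)
      qed (use M.p_ne in auto)
      finally show ?thesis by simp
    qed
    obtain e1 where e1: "e1 < e2"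
      "{e \<in> Iset \<gamma> p a n b \<pi> lam. Ffun \<gamma> p a \<omega> n b \<pi> lam e = 0} = {e1, e2}"
      "\<forall>e\<in>{e1, e2}. deriv (Ffun \<gamma> p a \<omega> n b \<pi> lam) e > 0 \<longleftrightarrow> e = e2"
      using M.roots_at_lam[OF lp e2I Fe2 De2] by blast
    show "\<exists>e1 e2. e1 < e2 \<and> e2 < 0 \<and>
           {e \<in> Iset \<gamma> p a n b \<pi> lam. Ffun \<gamma> p a \<omega> n b \<pi> lam e = 0} = {e1, e2} \<and>
           ee lam = e2 \<and>
           (\<forall>e\<in>{e1, e2}. deriv (Ffun \<gamma> p a \<omega> n b \<pi> lam) e > 0 \<longleftrightarrow> e = e2)"
      using e1 neg unfolding e2_def by blast
  qed
qed



end
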